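(* Let $S_{r,N}$ be a nontrivial atomic exponential Puiseux semiring. Then $$\{|\mathsf{n}(r)^{\delta_n}-\mathsf{d}(r)^{\delta_n}|: n\in\mathbb{N}\}\subseteq\Delta(S_{r,N})\subseteq\{k\in\mathbb{Z}: |\mathsf{n}(r)-\mathsf{d}(r)|\le k\le|\mathsf{n}(r)^{\delta_0}-\mathsf{d}(r)^{\delta_0}|\}.$$
   Context: $\mathbb{N}=\{0,1,2,\dots\}$. A numerical monoid $N$ is an additive submonoid of $\mathbb{N}$ with finite complement in $\mathbb{N}$; let $s_0<s_1<\cdots$ be its elements and $\delta_n=s_{n+1}-s_n$. For $r\in\mathbb{Q}_{>0}$ write $r=\mathsf{n}(r)/\mathsf{d}(r)$ in lowest terms. The exponential Puiseux semiring $S_{r,N}$ is the additive submonoid of $\mathbb{Q}_{\ge0}$ generated by $\{r^k:k\in N\}$; it is nontrivial if $r\notin\mathbb{N}$, and then atomic iff $\mathsf{n}(r)>1$. For an atomic monoid $M$ and $x\in M$ with set of lengths $\mathsf{L}(x)$, a positive integer $d$ is a distance of $x$ if $\mathsf{L}(x)\cap\{l,\dots,l+d\}=\{l,l+d\}$ for some $l\in\mathsf{L}(x)$; $\Delta(x)$ is the set of distances of $x$ and $\Delta(M)=\bigcup_{x\in M}\Delta(x)$. *)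

theory Defs
  imports Complex_Main "HOL-Library.Multiset" "HOL-Library.Infinite_Set"
begin

definition numerical_monoid :: "nat set \<Rightarrow> bool" where
  "numerical_monoid N \<longleftrightarrow> 0 \<in> N \<and> (\<forall>a\<in>N. \<forall>b\<in>N. a + b \<in> N) \<and> finite (UNIV - N)"

text \<open>s_n: the n-th element of N in increasing order; delta_n = s_(n+1) - s_n.\<close>
definition nm_elem :: "nat set \<Rightarrow> nat \<Rightarrow> nat" where
  "nm_elem N n = enumerate N n"

definition nm_gap :: "nat set \<Rightarrow> nat \<Rightarrow> nat" where
  "nm_gap N n = nm_elem N (Suc n) - nm_elem N n"

definition rnum :: "rat \<Rightarrow> int" where "rnum r = fst (quotient_of r)"
definition rden :: "rat \<Rightarrow> int" where "rden r = snd (quotient_of r)"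

inductive_set gen_monoid :: "rat set \<Rightarrow> rat set" for A where
  zero: "0 \<in> gen_monoid A"
| add: "a \<in> A \<Longrightarrow> x \<in> gen_monoid A \<Longrightarrow> a + x \<in> gen_monoid A"

definition exp_puiseux :: "rat \<Rightarrow> nat set \<Rightarrow> rat set" where
  "exp_puiseux r N = gen_monoid {r ^ k | k. k \<in> N}"

text \<open>Atoms of a submonoid M of (Q_{>=0},+): its only unit is 0.\<close>
definition atoms :: "rat set \<Rightarrow> rat set" where
  "atoms M = {a \<in> M. a \<noteq> 0 \<and> (\<forall>x\<in>M. \<forall>y\<in>M. a = x + y \<longrightarrow> x = 0 \<or> y = 0)}"

definition factorizations :: "rat set \<Rightarrow> rat \<Rightarrow> rat multiset set" where
  "factorizations M x = {z. set_mset z \<subseteq> atoms M \<and> sum_mset z = x}"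

definition atomic_monoid :: "rat set \<Rightarrow> bool" where
  "atomic_monoid M \<longleftrightarrow> (\<forall>x\<in>M. x \<noteq> 0 \<longrightarrow> factorizations M x \<noteq> {})"

definition lengths :: "rat set \<Rightarrow> rat \<Rightarrow> nat set" where
  "lengths M x = size ` factorizations M x"

definition delta_elem :: "rat set \<Rightarrow> rat \<Rightarrow> nat set" where
  "delta_elem M x = {d. d > 0 \<and> (\<exists>l\<in>lengths M x. lengths M x \<inter> {l..l+d} = {l, l+d})}"

definition delta_set :: "rat set \<Rightarrow> nat set" where
  "delta_set M = (\<Union>x\<in>M. delta_elem M x)"

end

theory Submission imports Defs begin

lemma msum_count:
  fixes Z :: "nat multiset" and f :: "nat \<Rightarrow> 'a::comm_semiring_1"
  assumes "\<forall>k\<in>#Z. k \<le> D"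
  shows "sum_mset (image_mset f Z) = (\<Sum>j\<le>D. of_nat (count Z j) * f j)"
  using assms
proof (induction Z)
  case empty then show ?case by simp
next
  case (add k Z)
  have kD: "k \<le> D" using add.prems by simp
  have IH: "sum_mset (image_mset f Z) = (\<Sum>j\<le>D. of_nat (count Z j) * f j)"
    using add.IH add.prems by simp
  have "(\<Sum>j\<le>D. of_nat (count (add_mset k Z) j) * f j)
      = (\<Sum>j\<le>D. of_nat (count Z j) * f j + (if j = k then f j else 0))"
    by (rule sum.cong) (auto simp: algebra_simps)
  also have "\<dots> = (\<Sum>j\<le>D. of_nat (count Z j) * f j) + f k"
    using kD by (simp add: sum.distrib)
  also have "\<dots> = sum_mset (image_mset f (add_mset k Z))"
    using IH by (simp add: ac_simps)
  finally show ?case by simp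
qed

lemma msize_count:
  fixes Z :: "nat multiset"
  assumes "\<forall>k\<in>#Z. k \<le> D"
  shows "size Z = (\<Sum>j\<le>D. count Z j)"
proof -
  have "sum_mset (image_mset (\<lambda>_. 1::nat) Z) = (\<Sum>j\<le>D. of_nat (count Z j) * 1)"
    by (rule msum_count[OF assms])
  moreover have "sum_mset (image_mset (\<lambda>_. 1::nat) Z) = size Z"
    by (induction Z) auto
  ultimately show ?thesis by simp
qed

locale ps0 =
  fixes A B :: nat and N :: "nat set"
  assumes nm: "numerical_monoid N" and A1: "A \<ge> 1" and B2: "B \<ge> 2" and cop: "coprime A B"
begin

definition rr :: rat where "rr = of_nat A / of_nat B"
definition val :: "nat multiset \<Rightarrow> rat" where "val Z = sum_mset (image_mset (\<lambda>k. rr ^ k) Z)"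

lemma rr_pos: "rr > 0" using A1 B2 by (simp add: rr_def)

lemma rrB: "rr * of_nat B = of_nat A" using B2 by (simp add: rr_def)

lemma rr_scale: "j \<le> D \<Longrightarrow> rr ^ j * of_nat B ^ D = of_nat A ^ j * of_nat B ^ (D - j)"
proof -
  assume jD: "j \<le> D"
  have 1: "(of_nat B :: rat) ^ D = of_nat B ^ j * of_nat B ^ (D - j)"
    by (metis jD le_add_diff_inverse power_add)
  have 2: "rr ^ j * of_nat B ^ j = of_nat A ^ j"
    by (metis rrB power_mult_distrib)
  have "rr ^ j * of_nat B ^ D = (rr ^ j * of_nat B ^ j) * of_nat B ^ (D - j)"
    unfolding 1 by (rule mult.assoc[symmetric])
  then show ?thesis unfolding 2 .
qed

lemma eqsum:
  assumes "val Z = val Z'" "\<forall>k\<in>#Z. k \<le> D" "\<forall>k\<in>#Z'. k \<le> D"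
  shows "(\<Sum>j\<le>D. (int (count Z j) - int (count Z' j)) * (int A ^ j * int B ^ (D - j))) = 0"
proof -
  have v: "val X * of_nat B ^ D = (\<Sum>j\<le>D. of_nat (count X j) * (of_nat A ^ j * of_nat B ^ (D - j)))"
    if "\<forall>k\<in>#X. k \<le> D" for X
  proof -
    have "val X = (\<Sum>j\<le>D. of_nat (count X j) * rr ^ j)"
      unfolding val_def by (rule msum_count[OF that])
    then have "val X * of_nat B ^ D = (\<Sum>j\<le>D. of_nat (count X j) * rr ^ j) * of_nat B ^ D"
      by simp
    also have "\<dots> = (\<Sum>j\<le>D. of_nat (count X j) * (rr ^ j * of_nat B ^ D))"
      by (simp add: sum_distrib_right mult.assoc)
    also have "\<dots> = (\<Sum>j\<le>D. of_nat (count X j) * (of_nat A ^ j * of_nat B ^ (D - j)))"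
      by (rule sum.cong) (auto simp: rr_scale)
    finally show ?thesis .
  qed
  have "rat_of_int (\<Sum>j\<le>D. (int (count Z j) - int (count Z' j)) * (int A ^ j * int B ^ (D - j)))
     = val Z * of_nat B ^ D - val Z' * of_nat B ^ D"
    using v[OF assms(2)] v[OF assms(3)] by (simp add: sum_subtractf algebra_simps)
  also have "\<dots> = 0" using assms(1) by simp
  finally show ?thesis by (simp only: of_int_eq_0_iff)
qed

lemma bound_ex: "\<exists>D::nat. (\<forall>k\<in>#Z. k \<le> D) \<and> (\<forall>k\<in>#Z'. k \<le> D) \<and> m \<le> D"
proof -
  define S where "S = set_mset Z \<union> set_mset Z' \<union> {m}"
  have fin: "finite S" by (simp add: S_def)
  have "\<forall>k\<in>S. k \<le> Max S" using Max_ge[OF fin] by blast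
  then show ?thesis unfolding S_def by blast
qed

lemma divA:
  assumes "val Z = val Z'" "\<forall>j. j \<noteq> m \<and> j < m + t \<longrightarrow> count Z j = count Z' j"
  shows "int A ^ t dvd int (count Z m) - int (count Z' m)"
proof -
  obtain D where D: "\<forall>k\<in>#Z. k \<le> D" "\<forall>k\<in>#Z'. k \<le> D" "m \<le> D" using bound_ex by blast
  define e where "e j = int (count Z j) - int (count Z' j)" for j
  define g where "g j = e j * (int A ^ j * int B ^ (D - j))" for j
  have s: "(\<Sum>j\<le>D. g j) = 0"
    using eqsum[OF assms(1) D(1,2)] by (simp add: e_def g_def)
  have sr: "(\<Sum>j\<le>D. g j) = g m + (\<Sum>j\<in>{..D} - {m}. g j)"
    by (rule sum.remove) (use D(3) in auto)
  have R: "int A ^ (m + t) dvd (\<Sum>j\<in>{..D} - {m}. g j)"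
  proof (rule dvd_sum)
    fix j assume j: "j \<in> {..D} - {m}"
    show "int A ^ (m + t) dvd g j"
    proof (cases "j < m + t")
      case True then have "e j = 0" using assms(2) j by (auto simp: e_def)
      then show ?thesis by (simp add: g_def)
    next
      case False then have "int A ^ (m + t) dvd int A ^ j" by (simp add: le_imp_power_dvd)
      then show ?thesis unfolding g_def by (meson dvd_mult dvd_mult2)
    qed
  qed
  have "g m = - (\<Sum>j\<in>{..D} - {m}. g j)" using s sr by linarith
  then have "int A ^ (m + t) dvd g m" using R by simp
  then have "int A ^ m * int A ^ t dvd int A ^ m * (e m * int B ^ (D - m))"
    unfolding g_def by (simp add: power_add algebra_simps)
  then have "int A ^ t dvd e m * int B ^ (D - m)"
    using A1 by (subst (asm) dvd_times_left_cancel_iff) auto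
  moreover have "coprime (int A ^ t) (int B ^ (D - m))" using cop by simp
  ultimately show ?thesis unfolding e_def
    using coprime_dvd_mult_left_iff by blast
qed

lemma divB:
  assumes "val Z = val Z'" "\<forall>j. j \<noteq> M \<and> (M < j \<or> M < j + t) \<longrightarrow> count Z j = count Z' j"
  shows "int B ^ t dvd int (count Z M) - int (count Z' M)"
proof -
  obtain D where D: "\<forall>k\<in>#Z. k \<le> D" "\<forall>k\<in>#Z'. k \<le> D" "M \<le> D" using bound_ex by blast
  define e where "e j = int (count Z j) - int (count Z' j)" for j
  define g where "g j = e j * (int A ^ j * int B ^ (D - j))" for j
  have s: "(\<Sum>j\<le>D. g j) = 0"
    using eqsum[OF assms(1) D(1,2)] by (simp add: e_def g_def)
  have sr: "(\<Sum>j\<le>D. g j) = g M + (\<Sum>j\<in>{..D} - {M}. g j)"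
    by (rule sum.remove) (use D(3) in auto)
  have R: "int B ^ (D - M + t) dvd (\<Sum>j\<in>{..D} - {M}. g j)"
  proof (rule dvd_sum)
    fix j assume j: "j \<in> {..D} - {M}"
    show "int B ^ (D - M + t) dvd g j"
    proof (cases "M < j \<or> M < j + t")
      case True then have "e j = 0" using assms(2) j by (auto simp: e_def)
      then show ?thesis by (simp add: g_def)
    next
      case False then have "D - M + t \<le> D - j" using D(3) by auto
      then have "int B ^ (D - M + t) dvd int B ^ (D - j)" by (simp add: le_imp_power_dvd)
      then show ?thesis unfolding g_def by (meson dvd_mult dvd_mult2)
    qed
  qed
  have "g M = - (\<Sum>j\<in>{..D} - {M}. g j)" using s sr by linarith
  then have "int B ^ (D - M + t) dvd g M" using R by simp
  then have "int B ^ (D - M) * int B ^ t dvd int B ^ (D - M) * (e M * int A ^ M)"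
    unfolding g_def by (simp add: power_add algebra_simps)
  then have "int B ^ t dvd e M * int A ^ M"
    using B2 by (subst (asm) dvd_times_left_cancel_iff) auto
  moreover have "coprime (int B ^ t) (int A ^ M)"
  proof -
    have "coprime (int A ^ M) (int B ^ t)" using cop by simp
    then show ?thesis by (rule coprime_commute[THEN iffD1])
  qed
  ultimately show ?thesis unfolding e_def
    using coprime_dvd_mult_left_iff by blast
qed

lemma divC:
  assumes "val Z = val Z'"
  shows "(int A - int B) dvd int (size Z) - int (size Z')"
proof -
  obtain D where D: "\<forall>k\<in>#Z. k \<le> D" "\<forall>k\<in>#Z'. k \<le> D" "0 \<le> D" using bound_ex[of Z Z' 0] by blast
  define e where "e j = int (count Z j) - int (count Z' j)" for j
  define g where "g j = e j * (int A ^ j * int B ^ (D - j))" for j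
  define m where "m = int A - int B"
  have s: "(\<Sum>j\<le>D. g j) = 0"
    using eqsum[OF assms(1) D(1,2)] by (simp add: e_def g_def)
  have h: "(int A ^ j * int B ^ (D - j)) mod m = int B ^ D mod m" if "j \<le> D" for j
  proof -
    have "int A = int B + m" unfolding m_def by simp
    then have e1: "int A mod m = int B mod m" by simp
    have "int A ^ j mod m = (int A mod m) ^ j mod m" by (rule power_mod[symmetric])
    also have "\<dots> = (int B mod m) ^ j mod m" by (simp only: e1)
    also have "\<dots> = int B ^ j mod m" by (rule power_mod)
    finally have e2: "int A ^ j mod m = int B ^ j mod m" .
    have "(int A ^ j * int B ^ (D - j)) mod m = ((int A ^ j mod m) * int B ^ (D - j)) mod m"
      by (rule mod_mult_left_eq[symmetric])
    also have "\<dots> = ((int B ^ j mod m) * int B ^ (D - j)) mod m" by (simp only: e2)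
    also have "\<dots> = (int B ^ j * int B ^ (D - j)) mod m" by (rule mod_mult_left_eq)
    also have "int B ^ j * int B ^ (D - j) = int B ^ D"
      using that by (simp add: power_add[symmetric])
    finally show ?thesis .
  qed
  have gm: "g j mod m = (e j * int B ^ D) mod m" if "j \<le> D" for j
  proof -
    have "g j mod m = (e j * ((int A ^ j * int B ^ (D - j)) mod m)) mod m"
      unfolding g_def by (rule mod_mult_right_eq[symmetric])
    also have "\<dots> = (e j * (int B ^ D mod m)) mod m" using h[OF that] by simp
    also have "\<dots> = (e j * int B ^ D) mod m" by (rule mod_mult_right_eq)
    finally show ?thesis .
  qed
  have "(\<Sum>j\<le>D. g j) mod m = (\<Sum>j\<le>D. g j mod m) mod m" by (rule mod_sum_eq[symmetric])
  also have "(\<Sum>j\<le>D. g j mod m) = (\<Sum>j\<le>D. (e j * int B ^ D) mod m)"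
    by (rule sum.cong) (auto simp: gm)
  also have "(\<Sum>j\<le>D. (e j * int B ^ D) mod m) mod m = (\<Sum>j\<le>D. e j * int B ^ D) mod m"
    by (rule mod_sum_eq)
  also have "(\<Sum>j\<le>D. e j * int B ^ D) = int B ^ D * (\<Sum>j\<le>D. e j)"
    by (simp add: sum_distrib_right mult.commute)
  finally have "(int B ^ D * (\<Sum>j\<le>D. e j)) mod m = 0" using s by simp
  then have "m dvd int B ^ D * (\<Sum>j\<le>D. e j)" by (rule mod_0_imp_dvd)
  moreover have "coprime m (int B ^ D)"
  proof -
    have "coprime (int A) (int B)" using cop by simp
    then have "gcd (int A) (int B) = 1" by (rule coprime_imp_gcd_eq_1)
    then have "gcd m (int B) = 1" unfolding m_def by (simp only: gcd_diff1)
    then have "coprime m (int B)" by (rule gcd_eq_1_imp_coprime)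
    then show ?thesis by simp
  qed
  ultimately have "m dvd (\<Sum>j\<le>D. e j)" using coprime_dvd_mult_right_iff by blast
  moreover have "(\<Sum>j\<le>D. e j) = int (size Z) - int (size Z')"
    using msize_count[OF D(1)] msize_count[OF D(2)] by (simp add: e_def sum_subtractf)
  ultimately show ?thesis by (simp add: m_def)
qed


lemma zeroN: "0 \<in> N" using nm by (simp add: numerical_monoid_def)
lemma addN: "a \<in> N \<Longrightarrow> b \<in> N \<Longrightarrow> a + b \<in> N" using nm by (simp add: numerical_monoid_def)
lemma infN: "infinite N"
proof
  assume "finite N"
  moreover have "finite (UNIV - N)" using nm by (simp add: numerical_monoid_def)
  ultimately have "finite (N \<union> (UNIV - N))" by simp
  then show False by simp
qed

lemma exN: "\<exists>k. k \<in> N \<and> j < k"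
proof (rule ccontr)
  assume "\<not> ?thesis"
  then have "N \<subseteq> {..j}" by (auto simp: not_less)
  then show False using infN finite_subset by blast
qed

definition succN :: "nat \<Rightarrow> nat" where "succN j = (LEAST k. k \<in> N \<and> j < k)"

lemma succN: "succN j \<in> N" "j < succN j"
  using LeastI_ex[OF exN[of j]] by (auto simp: succN_def)

lemma succN_gap: "j < k \<Longrightarrow> k < succN j \<Longrightarrow> k \<notin> N"
  unfolding succN_def using not_less_Least by blast

lemma succN_le: "k \<in> N \<Longrightarrow> j < k \<Longrightarrow> succN j \<le> k"
  unfolding succN_def by (simp add: Least_le)

definition s1 :: nat where "s1 = succN 0"

lemma s1: "s1 \<in> N" "0 < s1" using succN[of 0] by (auto simp: s1_def)

lemma succN_bound: "j \<in> N \<Longrightarrow> succN j \<le> j + s1"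
  using succN_le[of "j + s1" j] addN s1 by auto

definition predN :: "nat \<Rightarrow> nat" where "predN j = Max {k\<in>N. k < j}"

lemma predN:
  assumes "0 < j"
  shows "predN j \<in> N" "predN j < j" "\<And>k. predN j < k \<Longrightarrow> k < j \<Longrightarrow> k \<notin> N"
proof -
  have fin: "finite {k\<in>N. k < j}" by simp
  have ne: "{k\<in>N. k < j} \<noteq> {}" using zeroN assms by auto
  show "predN j \<in> N" "predN j < j" using Max_in[OF fin ne] by (auto simp: predN_def)
  fix k assume k: "predN j < k" "k < j"
  show "k \<notin> N"
  proof
    assume "k \<in> N"
    then have "k \<le> predN j" unfolding predN_def using Max_ge[OF fin] k(2) by blast
    then show False using k(1) by simp
  qed
qed

lemma succ_predN: assumes "j \<in> N" "0 < j" shows "succN (predN j) = j"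
proof -
  have "succN (predN j) \<le> j" using succN_le[OF assms(1) predN(2)[OF assms(2)]] .
  moreover have "\<not> succN (predN j) < j"
    using predN(3)[OF assms(2), of "succN (predN j)"] succN[of "predN j"] by auto
  ultimately show ?thesis by simp
qed

lemma predN_bound: assumes "j \<in> N" "0 < j" shows "j \<le> predN j + s1"
  using succN_bound[OF predN(1)[OF assms(2)]] succ_predN[OF assms] by simp

lemma enum0: "enumerate N 0 = 0"
  unfolding enumerate_0 using zeroN by (rule Least_eq_0)

lemma enumSuc: "enumerate N (Suc n) = succN (enumerate N n)"
  by (simp add: enumerate_Suc''[OF infN] succN_def conj_commute)

lemma enumN: "enumerate N n \<in> N" using enumerate_in_set[OF infN] .

lemma gap0: "nm_gap N 0 = s1"
  by (simp add: nm_gap_def nm_elem_def enumSuc enum0 s1_def)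

lemma gapn: "nm_gap N n = succN (enumerate N n) - enumerate N n"
  by (simp add: nm_gap_def nm_elem_def enumSuc)


abbreviation MM where "MM \<equiv> exp_puiseux rr N"

definition FF :: "rat \<Rightarrow> nat multiset set" where
  "FF x = {Z. set_mset Z \<subseteq> N \<and> val Z = x}"

lemma val_empty[simp]: "val {#} = 0" by (simp add: val_def)
lemma val_add_mset[simp]: "val (add_mset k Z) = rr ^ k + val Z" by (simp add: val_def)
lemma val_plus[simp]: "val (X + Y) = val X + val Y" by (simp add: val_def)
lemma val_rep[simp]: "val (replicate_mset n k) = of_nat n * rr ^ k"
  by (induction n) (auto simp: algebra_simps)
lemma val_nonneg: "0 \<le> val Z"
  by (induction Z) (auto intro: add_nonneg_nonneg simp: rr_pos less_imp_le)
lemma val_pos: "Z \<noteq> {#} \<Longrightarrow> 0 < val Z"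
proof -
  assume "Z \<noteq> {#}"
  then obtain k Z' where "Z = add_mset k Z'" by (metis multiset_cases)
  then show ?thesis using val_nonneg[of Z'] rr_pos by (simp add: add_pos_nonneg)
qed
lemma val_zero_iff: "val Z = 0 \<longleftrightarrow> Z = {#}"
  using val_pos[of Z] by (cases "Z = {#}") auto

lemma val_in: "set_mset Z \<subseteq> N \<Longrightarrow> val Z \<in> MM"
proof (induction Z)
  case empty then show ?case by (simp add: exp_puiseux_def gen_monoid.zero)
next
  case (add k Z)
  then have "rr ^ k \<in> {rr ^ k | k. k \<in> N}" by auto
  moreover have "val Z \<in> MM" using add by simp
  ultimately show ?case unfolding exp_puiseux_def by (simp add: gen_monoid.add)
qed

lemma in_val: "x \<in> MM \<Longrightarrow> \<exists>Z. set_mset Z \<subseteq> N \<and> val Z = x"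
  unfolding exp_puiseux_def
proof (induction rule: gen_monoid.induct)
  case zero
  then show ?case by (intro exI[of _ "{#}"]) simp
next
  case (add a x)
  then obtain k where k: "k \<in> N" "a = rr ^ k" by blast
  obtain Z where Z: "set_mset Z \<subseteq> N" "val Z = x" using add.IH by blast
  show ?case using k Z by (intro exI[of _ "add_mset k Z"]) simp
qed

lemma atoms_sub: "atoms MM \<subseteq> (\<lambda>k. rr ^ k) ` N"
proof
  fix a assume a: "a \<in> atoms MM"
  then have aM: "a \<in> MM" and a0: "a \<noteq> 0"
    and ind: "\<forall>x\<in>MM. \<forall>y\<in>MM. a = x + y \<longrightarrow> x = 0 \<or> y = 0"
    by (auto simp: atoms_def)
  obtain Z where Z: "set_mset Z \<subseteq> N" "val Z = a" using in_val[OF aM] by blast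
  have "Z \<noteq> {#}" using Z a0 by auto
  then obtain k Z' where kZ: "Z = add_mset k Z'" by (metis multiset_cases)
  have kN: "k \<in> N" and Z'N: "set_mset Z' \<subseteq> N" using Z(1) kZ by auto
  have "a = rr ^ k + val Z'" using Z(2) kZ by simp
  moreover have "rr ^ k \<noteq> 0" using rr_pos by simp
  ultimately have "val Z' = 0" using ind val_in[of "{#k#}"] val_in[OF Z'N] kN by force
  then show "a \<in> (\<lambda>k. rr ^ k) ` N" using \<open>a = rr ^ k + val Z'\<close> kN by simp
qed

lemma rr_ne1: "rr \<noteq> 1"
proof
  assume "rr = 1"
  then have "A = B" using B2 by (simp add: rr_def)
  then have "coprime B B" using cop by simp
  then show False using B2 by simp
qed

lemma rr_inj: "rr ^ i = rr ^ j \<Longrightarrow> i = j"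
proof (rule ccontr)
  assume e: "rr ^ i = rr ^ j" and ne: "i \<noteq> j"
  show False
  proof (cases "rr < 1")
    case True
    have "rr ^ max i j < rr ^ min i j"
      using ne True rr_pos by (intro power_strict_decreasing) auto
    then show ?thesis using e by (cases "i \<le> j") (auto simp: max_def min_def)
  next
    case False
    then have "1 < rr" using rr_ne1 by simp
    then have "rr ^ min i j < rr ^ max i j"
      using ne by (intro power_strict_increasing) auto
    then show ?thesis using e by (cases "i \<le> j") (auto simp: max_def min_def)
  qed
qed

lemma mset_lift:
  fixes z :: "'b multiset"
  shows "set_mset z \<subseteq> f ` S \<Longrightarrow> \<exists>Z. set_mset Z \<subseteq> S \<and> z = image_mset f Z"
proof (induction z)
  case empty then show ?case by (intro exI[of _ "{#}"]) simp
next
  case (add x z)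
  then obtain Z where Z: "set_mset Z \<subseteq> S" "z = image_mset f Z" by auto
  obtain k where k: "k \<in> S" "x = f k" using add.prems by auto
  show ?case using Z k by (intro exI[of _ "add_mset k Z"]) simp
qed

lemma lengths_eq:
  assumes "atoms MM = (\<lambda>k. rr ^ k) ` N"
  shows "lengths MM x = size ` FF x"
proof
  show "lengths MM x \<subseteq> size ` FF x"
  proof
    fix l assume "l \<in> lengths MM x"
    then obtain z where z: "set_mset z \<subseteq> atoms MM" "sum_mset z = x" "l = size z"
      by (auto simp: lengths_def factorizations_def)
    obtain Z where Z: "set_mset Z \<subseteq> N" "z = image_mset (\<lambda>k. rr ^ k) Z"
      using mset_lift[of z "\<lambda>k. rr ^ k" N] z(1) assms by auto
    have "Z \<in> FF x" using Z z by (simp add: FF_def val_def)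
    then show "l \<in> size ` FF x" using z Z by simp
  qed
next
  show "size ` FF x \<subseteq> lengths MM x"
  proof
    fix l assume "l \<in> size ` FF x"
    then obtain Z where Z: "set_mset Z \<subseteq> N" "val Z = x" "l = size Z" by (auto simp: FF_def)
    let ?z = "image_mset (\<lambda>k. rr ^ k) Z"
    have "?z \<in> factorizations MM x" using Z assms by (auto simp: factorizations_def val_def)
    then show "l \<in> lengths MM x" unfolding lengths_def using Z by force
  qed
qed

lemma count_le_val: "of_nat (count Z j) * rr ^ j \<le> val Z"
proof -
  have "Z = {#k \<in># Z. k = j#} + {#k \<in># Z. k \<noteq> j#}" by (rule multiset_partition)
  then have "val Z = val {#k \<in># Z. k = j#} + val {#k \<in># Z. k \<noteq> j#}" by (metis val_plus)
  also have "val {#k \<in># Z. k = j#} = of_nat (count Z j) * rr ^ j"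
    by (simp add: filter_eq_replicate_mset)
  finally show ?thesis using val_nonneg[of "{#k \<in># Z. k \<noteq> j#}"] by simp
qed

lemma shift: "of_nat A ^ d * rr ^ k = of_nat B ^ d * rr ^ (k + d)"
proof -
  have "of_nat B ^ d * rr ^ (k + d) = rr ^ k * (rr * of_nat B) ^ d"
    by (simp add: power_add power_mult_distrib algebra_simps)
  moreover have "rr * of_nat B = of_nat A" by (rule rrB)
  ultimately show ?thesis by simp
qed

lemma A1_notatomic:
  assumes "A = 1"
  shows "\<not> atomic_monoid MM"
proof -
  have noat: "rr ^ k \<notin> atoms MM" if kN: "k \<in> N" for k
  proof
    assume at: "rr ^ k \<in> atoms MM"
    define s where "s = succN k"
    define d where "d = s - k"
    have sN: "s \<in> N" and ks: "k < s" using succN[of k] by (auto simp: s_def)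
    have d1: "1 \<le> d" using ks by (simp add: d_def)
    have Bd: "2 \<le> B ^ d"
    proof -
      have "B ^ 1 \<le> B ^ d" using d1 B2 by (intro power_increasing) auto
      then show ?thesis using B2 by simp
    qed
    have "of_nat A ^ d * rr ^ k = of_nat B ^ d * rr ^ (k + d)" by (rule shift)
    then have rk: "rr ^ k = of_nat (B ^ d) * rr ^ s"
      using assms ks by (simp add: d_def)
    define y where "y = val (replicate_mset (B ^ d - 1) s)"
    have yv: "y = of_nat (B ^ d - 1) * rr ^ s" by (simp add: y_def)
    have "rr ^ k = rr ^ s + y"
      using rk Bd unfolding yv by (simp add: of_nat_diff algebra_simps)
    moreover have "rr ^ s \<in> MM" using val_in[of "{#s#}"] sN by simp
    moreover have "y \<in> MM" unfolding y_def using sN by (intro val_in) auto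
    moreover have "rr ^ s \<noteq> 0" using rr_pos by simp
    moreover have "y \<noteq> 0"
    proof -
      have "(of_nat B :: rat) ^ d \<noteq> 1"
      proof
        assume "(of_nat B :: rat) ^ d = 1"
        then have "B ^ d = 1" by (metis of_nat_eq_1_iff of_nat_power)
        with Bd show False by simp
      qed
      then show ?thesis using Bd rr_pos unfolding yv by simp
    qed
    ultimately show False using at unfolding atoms_def by blast
  qed
  have "atoms MM = {}" using atoms_sub noat by blast
  moreover have "1 \<in> MM" using val_in[of "{#0#}"] zeroN by simp
  ultimately show ?thesis
    unfolding atomic_monoid_def factorizations_def
    by (auto intro!: bexI[of _ 1])
qed

lemma single_aux: "k \<in># Z \<Longrightarrow> val Z = rr ^ k \<Longrightarrow> Z = {#k#}"
proof -
  assume k: "k \<in># Z" and v: "val Z = rr ^ k"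
  have Z: "Z = add_mset k (Z - {#k#})" using k by (simp add: insert_DiffM)
  then have "val Z = rr ^ k + val (Z - {#k#})" by (metis val_add_mset)
  then have "val (Z - {#k#}) = 0" using v by simp
  then have "Z - {#k#} = {#}" by (simp add: val_zero_iff)
  then show ?thesis using Z by simp
qed

lemma dvd_ge: "int d dvd int c - int 0 \<Longrightarrow> 0 < c \<Longrightarrow> d \<le> c"
  by (simp add: dvd_imp_le)

end

locale ps = ps0 +
  assumes A2: "A \<ge> 2"
begin

lemma single: "val Z = rr ^ k \<Longrightarrow> Z = {#k#}"
proof -
  assume v: "val Z = rr ^ k"
  have Zne: "Z \<noteq> {#}" using v rr_pos by auto
  have v1: "val Z = val {#k#}" using v by simp
  have fin: "finite (set_mset Z)" by simp
  have ne: "set_mset Z \<noteq> {}" using Zne by simp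
  show ?thesis
  proof (cases "A < B")
    case AB: True
    have rr1: "rr < 1" using AB B2 by (simp add: rr_def)
    define m where "m = Min (set_mset Z)"
    have mZ: "m \<in># Z" using Min_in[OF fin ne] by (simp add: m_def)
    have below: "count Z j = 0" if "j < m" for j
    proof (rule ccontr)
      assume "count Z j \<noteq> 0"
      then have "j \<in> set_mset Z" by simp
      then have "m \<le> j" unfolding m_def by (rule Min_le[OF fin])
      then show False using that by simp
    qed
    consider "m < k" | "k < m" | "m = k" by linarith
    then show ?thesis
    proof cases
      case 1
      have "int A ^ 1 dvd int (count Z m) - int (count {#k#} m)"
        by (rule divA[OF v1]) (use 1 below in auto)
      then have "int A dvd int (count Z m) - int 0" using 1 by simp
      then have cA: "A \<le> count Z m" using mZ by (intro dvd_ge) auto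
      have "of_nat A * rr ^ m \<le> of_nat (count Z m) * rr ^ m"
        using cA rr_pos by (intro mult_right_mono) auto
      also have "\<dots> \<le> val Z" by (rule count_le_val)
      finally have "of_nat A * rr ^ m \<le> rr ^ k" using v by simp
      moreover have "of_nat A * rr ^ m = of_nat B * rr ^ (m + 1)" using shift[of 1 m] by simp
      moreover have "2 * rr ^ (m + 1) \<le> of_nat B * rr ^ (m + 1)"
        using B2 rr_pos by (intro mult_right_mono) auto
      moreover have "rr ^ k \<le> rr ^ (m + 1)"
        using 1 rr1 rr_pos by (intro power_decreasing) auto
      moreover have "0 < rr ^ k" using rr_pos by simp
      ultimately show ?thesis by linarith
    next
      case 2
      have "int A ^ 1 dvd int (count Z k) - int (count {#k#} k)"
        by (rule divA[OF v1]) (use 2 below in auto)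
      then have "int A dvd - 1" using 2 below by simp
      then have "int A dvd int 1" by simp
      then have "A dvd 1" by (simp only: of_nat_dvd_iff)
      then show ?thesis using A2 by simp
    next
      case 3 then show ?thesis using single_aux mZ v by simp
    qed
  next
    case AB: False
    have "A \<noteq> B"
    proof
      assume e: "A = B"
      have "rr = of_nat A / of_nat B" by (simp only: rr_def)
      also have "\<dots> = 1" using e B2 by simp
      finally show False using rr_ne1 by simp
    qed
    then have AB': "B < A" using AB by simp
    have rr1: "1 < rr" using AB' B2 by (simp add: rr_def)
    define m where "m = Max (set_mset Z)"
    have mZ: "m \<in># Z" using Max_in[OF fin ne] by (simp add: m_def)
    have above: "count Z j = 0" if "m < j" for j
    proof (rule ccontr)
      assume "count Z j \<noteq> 0"
      then have "j \<in> set_mset Z" by simp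
      then have "j \<le> m" unfolding m_def by (rule Max_ge[OF fin])
      then show False using that by simp
    qed
    consider "k < m" | "m < k" | "m = k" by linarith
    then show ?thesis
    proof cases
      case 1
      have "int B ^ 1 dvd int (count Z m) - int (count {#k#} m)"
        by (rule divB[OF v1]) (use 1 above in auto)
      then have "int B dvd int (count Z m) - int 0" using 1 by simp
      then have cB: "B \<le> count Z m" using mZ by (intro dvd_ge) auto
      obtain m' where m': "m = m' + 1" using 1 by (cases m) auto
      have "of_nat B * rr ^ m \<le> of_nat (count Z m) * rr ^ m"
        using cB rr_pos by (intro mult_right_mono) auto
      also have "\<dots> \<le> val Z" by (rule count_le_val)
      finally have "of_nat B * rr ^ m \<le> rr ^ k" using v by simp
      moreover have "of_nat A * rr ^ m' = of_nat B * rr ^ m" using shift[of 1 m'] m' by simp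
      moreover have "2 * rr ^ m' \<le> of_nat A * rr ^ m'"
        using A2 rr_pos by (intro mult_right_mono) auto
      moreover have "rr ^ k \<le> rr ^ m'"
        using 1 m' rr1 by (intro power_increasing) auto
      moreover have "0 < rr ^ k" using rr_pos by simp
      ultimately show ?thesis by linarith
    next
      case 2
      have "int B ^ 1 dvd int (count Z k) - int (count {#k#} k)"
        by (rule divB[OF v1]) (use 2 above in auto)
      then have "int B dvd - 1" using 2 above by simp
      then have "int B dvd int 1" by simp
      then have "B dvd 1" by (simp only: of_nat_dvd_iff)
      then show ?thesis using B2 by simp
    next
      case 3 then show ?thesis using single_aux mZ v by simp
    qed
  qed
qed

lemma atoms_eq: "atoms MM = (\<lambda>k. rr ^ k) ` N"
proof
  show "atoms MM \<subseteq> (\<lambda>k. rr ^ k) ` N" by (rule atoms_sub)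
next
  show "(\<lambda>k. rr ^ k) ` N \<subseteq> atoms MM"
  proof
    fix a assume "a \<in> (\<lambda>k. rr ^ k) ` N"
    then obtain k where k: "k \<in> N" "a = rr ^ k" by auto
    have aM: "a \<in> MM" using val_in[of "{#k#}"] k by simp
    have a0: "a \<noteq> 0" using k rr_pos by simp
    have "x = 0 \<or> y = 0" if x: "x \<in> MM" and y: "y \<in> MM" and e: "a = x + y" for x y
    proof -
      obtain X where X: "set_mset X \<subseteq> N" "val X = x" using in_val[OF x] by blast
      obtain Y where Y: "set_mset Y \<subseteq> N" "val Y = y" using in_val[OF y] by blast
      have "val (X + Y) = rr ^ k" using X Y e k by simp
      then have "X + Y = {#k#}" by (rule single)
      then have "X = {#} \<or> Y = {#}" by (metis single_is_union)
      then show ?thesis using X Y by auto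
    qed
    then show "a \<in> atoms MM" using aM a0 by (auto simp: atoms_def)
  qed
qed

lemma lengths_FF: "lengths MM x = size ` FF x"
  by (rule lengths_eq[OF atoms_eq])


lemma reach_reduced:
  assumes step: "\<And>Z Z'. Z \<in> F \<Longrightarrow> stp Z Z' \<Longrightarrow> Z' \<in> F \<and> size Z' < size Z"
  shows "Z \<in> F \<Longrightarrow> \<exists>W\<in>F. (\<nexists>W'. stp W W') \<and> size W \<le> size Z"
proof (induction "size Z" arbitrary: Z rule: less_induct)
  case less
  show ?case
  proof (cases "\<exists>W'. stp Z W'")
    case True
    then obtain W' where W': "stp Z W'" by blast
    have "W' \<in> F" "size W' < size Z" using step[OF less.prems W'] by auto
    then obtain W where "W \<in> F" "\<nexists>W''. stp W W''" "size W \<le> size W'" using less.hyps by blast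
    then show ?thesis using \<open>size W' < size Z\<close> by (intro bexI[of _ W]) auto
  next
    case False then show ?thesis using less.prems by blast
  qed
qed

lemma dist_bound:
  assumes step: "\<And>Z Z'. Z \<in> F \<Longrightarrow> stp Z Z' \<Longrightarrow> Z' \<in> F \<and> size Z' < size Z \<and> size Z \<le> size Z' + U"
    and uniq: "\<And>Z Z'. Z \<in> F \<Longrightarrow> Z' \<in> F \<Longrightarrow> (\<nexists>W. stp Z W) \<Longrightarrow> (\<nexists>W. stp Z' W) \<Longrightarrow> Z = Z'"
    and Z: "Z \<in> F"
  shows "Z' \<in> F \<Longrightarrow> size Z < size Z' \<Longrightarrow> \<exists>W\<in>F. size Z < size W \<and> size W \<le> size Z + U"
proof (induction "size Z'" arbitrary: Z' rule: less_induct)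
  case less
  show ?case
  proof (cases "\<exists>W. stp Z' W")
    case True
    then obtain W where W: "stp Z' W" by blast
    have WF: "W \<in> F" and "size W < size Z'" and "size Z' \<le> size W + U"
      using step[OF less.prems(1) W] by auto
    show ?thesis
    proof (cases "size Z < size W")
      case True then show ?thesis using less.hyps[OF \<open>size W < size Z'\<close> WF] by blast
    next
      case False then show ?thesis using less.prems \<open>size Z' \<le> size W + U\<close>
        by (intro bexI[of _ Z']) auto
    qed
  next
    case False
    have st: "\<And>Z Z'. Z \<in> F \<Longrightarrow> stp Z Z' \<Longrightarrow> Z' \<in> F \<and> size Z' < size Z" using step by blast
    obtain W where W: "W \<in> F" "\<nexists>W'. stp W W'" "size W \<le> size Z"
      using reach_reduced[of F stp, OF st Z] by blast
    have "W = Z'" using uniq[OF W(1) less.prems(1) W(2) False] .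
    then show ?thesis using W(3) less.prems(2) by simp
  qed
qed

lemma push:
  assumes "p \<le> count Z j" "of_nat p * rr ^ j = of_nat q * rr ^ j'" "set_mset Z \<subseteq> N" "j' \<in> N"
  shows "set_mset (Z - replicate_mset p j + replicate_mset q j') \<subseteq> N"
    "val (Z - replicate_mset p j + replicate_mset q j') = val Z"
    "size (Z - replicate_mset p j + replicate_mset q j') + p = size Z + q"
    "Z = (Z - replicate_mset p j) + replicate_mset p j"
proof -
  have sub: "replicate_mset p j \<subseteq># Z" using assms(1) by (simp add: count_le_replicate_mset_subset_eq)
  show Zeq: "Z = (Z - replicate_mset p j) + replicate_mset p j"
    using sub by simp
  have "set_mset (Z - replicate_mset p j) \<subseteq> N" using assms(3) by (meson in_diffD subset_iff)
  then show "set_mset (Z - replicate_mset p j + replicate_mset q j') \<subseteq> N" using assms(4) by auto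
  have "val Z = val (Z - replicate_mset p j) + of_nat p * rr ^ j" by (subst Zeq) simp
  then show "val (Z - replicate_mset p j + replicate_mset q j') = val Z" using assms(2) by simp
  have "size Z = size (Z - replicate_mset p j) + p" by (subst Zeq) simp
  then show "size (Z - replicate_mset p j + replicate_mset q j') + p = size Z + q" by simp
qed

lemma val_size_ge:
  assumes "\<forall>k\<in>#Z. c \<le> rr ^ k"
  shows "of_nat (size Z) * c \<le> val Z"
  using assms by (induction Z) (auto simp: algebra_simps)

lemma small_dvd: "int d dvd int x - int y \<Longrightarrow> x < d \<Longrightarrow> y < d \<Longrightarrow> x = y"
proof (rule ccontr)
  assume h: "int d dvd int x - int y" "x < d" "y < d" "x \<noteq> y"
  then have "\<bar>int d\<bar> \<le> \<bar>int x - int y\<bar>" by (intro dvd_imp_le_int) auto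
  then show False using h by auto
qed

lemma powdiff_mono:
  fixes a b :: nat
  assumes "b \<le> a" "g \<le> s" "1 \<le> b"
  shows "a ^ g - b ^ g \<le> a ^ s - b ^ s"
  using assms(2)
proof (induction s)
  case 0 then show ?case by simp
next
  case (Suc s)
  show ?case
  proof (cases "g = Suc s")
    case True then show ?thesis by simp
  next
    case False
    then have "a ^ g - b ^ g \<le> a ^ s - b ^ s" using Suc by simp
    moreover have "a ^ s - b ^ s \<le> a ^ Suc s - b ^ Suc s"
    proof (cases "a = 0")
      case True then show ?thesis using assms(1) by simp
    next
      case False
      have bs: "b ^ s \<le> a ^ s" using assms(1) by (simp add: power_mono)
      have bs': "int b ^ s \<le> int a ^ s" by (metis of_nat_le_iff of_nat_power bs)
      have "int (a ^ s) * (int a - 1) \<ge> int (b ^ s) * (int b - 1)"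
        using bs' assms(1,3) by (intro mult_mono) auto
      then have ineq: "int a ^ s - int b ^ s \<le> int a ^ Suc s - int b ^ Suc s"
        by (simp add: algebra_simps)
      have bS: "b ^ Suc s \<le> a ^ Suc s" using assms(1) by (rule power_mono) simp
      have e1: "int (a ^ s - b ^ s) = int a ^ s - int b ^ s" using bs by (simp add: of_nat_diff)
      have e2: "int (a ^ Suc s - b ^ Suc s) = int a ^ Suc s - int b ^ Suc s"
        using bS by (simp only: of_nat_diff of_nat_power)
      have "int (a ^ s - b ^ s) \<le> int (a ^ Suc s - b ^ Suc s)" unfolding e1 e2 by (rule ineq)
      then show ?thesis by (simp only: of_nat_le_iff)
    qed
    ultimately show ?thesis by simp
  qed
qed

definition gp :: "nat \<Rightarrow> nat" where "gp j = succN j - j"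
definition hp :: "nat \<Rightarrow> nat" where "hp j = j - predN j"

lemma gp_pos: "1 \<le> gp j" using succN(2)[of j] by (simp add: gp_def)
lemma gp_le: "j \<in> N \<Longrightarrow> gp j \<le> s1" using succN_bound[of j] by (simp add: gp_def)
lemma gp_succ: "j + gp j = succN j" using succN(2)[of j] by (simp add: gp_def)
lemma hp_pos: "0 < j \<Longrightarrow> 1 \<le> hp j" using predN(2)[of j] by (simp add: hp_def)
lemma hp_le: "j \<in> N \<Longrightarrow> 0 < j \<Longrightarrow> hp j \<le> s1" using predN_bound[of j] by (simp add: hp_def)
lemma hp_pred: "0 < j \<Longrightarrow> predN j + hp j = j" using predN(2)[of j] by (simp add: hp_def)

lemma delta_le:
  assumes "\<And>Z Z'. Z \<in> FF x \<Longrightarrow> Z' \<in> FF x \<Longrightarrow> size Z < size Z' \<Longrightarrow> \<exists>W\<in>FF x. size Z < size W \<and> size W \<le> size Z + U"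
    and "d \<in> delta_elem MM x"
  shows "d \<le> U"
proof (rule ccontr)
  assume dU: "\<not> d \<le> U"
  from assms(2) obtain l where d0: "0 < d" and l: "l \<in> lengths MM x"
    and eq: "lengths MM x \<inter> {l..l+d} = {l, l+d}"
    by (auto simp: delta_elem_def)
  have "l + d \<in> lengths MM x" using eq by blast
  then obtain Z Z' where Z: "Z \<in> FF x" "size Z = l" and Z': "Z' \<in> FF x" "size Z' = l + d"
    using l unfolding lengths_FF by auto
  obtain W where W: "W \<in> FF x" "l < size W" "size W \<le> l + U"
    using assms(1)[OF Z(1) Z'(1)] Z Z' d0 by auto
  have "size W \<in> lengths MM x \<inter> {l..l+d}" using W dU unfolding lengths_FF by auto
  then show False using eq W dU by auto
qed

definition stp_up :: "nat multiset \<Rightarrow> nat multiset \<Rightarrow> bool" where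
  "stp_up Z Z' \<longleftrightarrow> (\<exists>j\<in>N. A ^ gp j \<le> count Z j \<and>
     Z' = Z - replicate_mset (A ^ gp j) j + replicate_mset (B ^ gp j) (succN j))"

definition stp_dn :: "nat multiset \<Rightarrow> nat multiset \<Rightarrow> bool" where
  "stp_dn Z Z' \<longleftrightarrow> (\<exists>j\<in>N. 0 < j \<and> B ^ hp j \<le> count Z j \<and>
     Z' = Z - replicate_mset (B ^ hp j) j + replicate_mset (A ^ hp j) (predN j))"

lemma up_val: "of_nat (A ^ gp j) * rr ^ j = of_nat (B ^ gp j) * rr ^ succN j"
  using shift[of "gp j" j] gp_succ[of j] by simp

lemma dn_val: "0 < j \<Longrightarrow> of_nat (B ^ hp j) * rr ^ j = of_nat (A ^ hp j) * rr ^ predN j"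
  using shift[of "hp j" "predN j"] hp_pred[of j] by simp

lemma up_step:
  assumes BA: "B < A" and Z: "Z \<in> FF x" and st: "stp_up Z Z'"
  shows "Z' \<in> FF x \<and> size Z' < size Z \<and> size Z \<le> size Z' + (A ^ s1 - B ^ s1)"
proof -
  obtain j where j: "j \<in> N" "A ^ gp j \<le> count Z j"
    and Z': "Z' = Z - replicate_mset (A ^ gp j) j + replicate_mset (B ^ gp j) (succN j)"
    using st by (auto simp: stp_up_def)
  have ZN: "set_mset Z \<subseteq> N" and vZ: "val Z = x" using Z by (auto simp: FF_def)
  note P = push[OF j(2) up_val ZN succN(1)]
  have "Z' \<in> FF x" using P(1,2) vZ unfolding Z' FF_def by simp
  moreover have "B ^ gp j < A ^ gp j" using BA gp_pos[of j] by (intro power_strict_mono) auto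
  moreover have "A ^ gp j - B ^ gp j \<le> A ^ s1 - B ^ s1"
    using BA gp_le[OF j(1)] B2 by (intro powdiff_mono) auto
  ultimately show ?thesis using P(3) unfolding Z'[symmetric] by linarith
qed

lemma dn_step:
  assumes AB: "A < B" and Z: "Z \<in> FF x" and st: "stp_dn Z Z'"
  shows "Z' \<in> FF x \<and> size Z' < size Z \<and> size Z \<le> size Z' + (B ^ s1 - A ^ s1)"
proof -
  obtain j where j: "j \<in> N" "0 < j" "B ^ hp j \<le> count Z j"
    and Z': "Z' = Z - replicate_mset (B ^ hp j) j + replicate_mset (A ^ hp j) (predN j)"
    using st by (auto simp: stp_dn_def)
  have ZN: "set_mset Z \<subseteq> N" and vZ: "val Z = x" using Z by (auto simp: FF_def)
  note P = push[OF j(3) dn_val[OF j(2)] ZN predN(1)[OF j(2)]]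
  have "Z' \<in> FF x" using P(1,2) vZ unfolding Z' FF_def by simp
  moreover have "A ^ hp j < B ^ hp j" using AB hp_pos[OF j(2)] by (intro power_strict_mono) auto
  moreover have "B ^ hp j - A ^ hp j \<le> B ^ s1 - A ^ s1"
    using AB hp_le[OF j(1,2)] A2 by (intro powdiff_mono) auto
  ultimately show ?thesis using P(3) unfolding Z'[symmetric] by linarith
qed

lemma up_uniq:
  assumes Z: "Z \<in> FF x" and Z': "Z' \<in> FF x"
    and rZ: "\<nexists>W. stp_up Z W" and rZ': "\<nexists>W. stp_up Z' W"
  shows "Z = Z'"
proof (rule ccontr)
  assume ne: "Z \<noteq> Z'"
  have ex: "\<exists>j. count Z j \<noteq> count Z' j"
  proof (rule ccontr)
    assume "\<not> (\<exists>j. count Z j \<noteq> count Z' j)"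
    then have "Z = Z'" by (intro multiset_eqI) auto
    with ne show False ..
  qed
  define m where "m = (LEAST j. count Z j \<noteq> count Z' j)"
  have mdiff: "count Z m \<noteq> count Z' m" unfolding m_def by (rule LeastI_ex[OF ex])
  have ZN: "set_mset Z \<subseteq> N" "set_mset Z' \<subseteq> N" and v: "val Z = val Z'" using Z Z' by (auto simp: FF_def)
  have cnt0: "count Z j = 0" "count Z' j = 0" if "j \<notin> N" for j
    using ZN that by (auto simp: not_in_iff[symmetric])
  have mN: "m \<in> N"
  proof (rule ccontr)
    assume "m \<notin> N" then show False using mdiff cnt0[of m] by simp
  qed
  have red: "count X j < A ^ gp j" if "\<nexists>W. stp_up X W" "j \<in> N" for X j
  proof (rule ccontr)
    assume "\<not> count X j < A ^ gp j"
    then have "stp_up X (X - replicate_mset (A ^ gp j) j + replicate_mset (B ^ gp j) (succN j))"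
      unfolding stp_up_def using that(2) by (intro bexI[of _ j]) auto
    then show False using that(1) by blast
  qed
  have "int A ^ gp m dvd int (count Z m) - int (count Z' m)"
  proof (rule divA[OF v], intro allI impI)
    fix j assume j: "j \<noteq> m \<and> j < m + gp m"
    show "count Z j = count Z' j"
    proof (cases "j < m")
      case True
      have "\<not> (count Z j \<noteq> count Z' j)" using True unfolding m_def by (rule not_less_Least)
      then show ?thesis by simp
    next
      case False
      then have "m < j" "j < succN m" using j gp_succ[of m] by auto
      then have "j \<notin> N" by (rule succN_gap)
      then show ?thesis using cnt0 by simp
    qed
  qed
  then have "int (A ^ gp m) dvd int (count Z m) - int (count Z' m)" by simp
  then have "count Z m = count Z' m"
    using red[OF rZ mN] red[OF rZ' mN] by (rule small_dvd)
  then show False using mdiff by simp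
qed

lemma dn_uniq:
  assumes Z: "Z \<in> FF x" and Z': "Z' \<in> FF x"
    and rZ: "\<nexists>W. stp_dn Z W" and rZ': "\<nexists>W. stp_dn Z' W"
  shows "Z = Z'"
proof (rule ccontr)
  assume ne: "Z \<noteq> Z'"
  define S where "S = {j. count Z j \<noteq> count Z' j}"
  have Ssub: "S \<subseteq> set_mset Z \<union> set_mset Z'"
  proof
    fix j assume "j \<in> S"
    then have "count Z j \<noteq> count Z' j" by (simp add: S_def)
    then show "j \<in> set_mset Z \<union> set_mset Z'"
      using not_in_iff[of j Z] not_in_iff[of j Z'] by auto
  qed
  have finS: "finite S" by (rule finite_subset[OF Ssub]) simp
  have Sne: "S \<noteq> {}"
  proof
    assume "S = {}"
    then have "Z = Z'" by (intro multiset_eqI) (auto simp: S_def)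
    with ne show False ..
  qed
  define m where "m = Max S"
  have mdiff: "count Z m \<noteq> count Z' m" using Max_in[OF finS Sne] by (simp add: m_def S_def)
  have above: "count Z j = count Z' j" if "m < j" for j
  proof (rule ccontr)
    assume "count Z j \<noteq> count Z' j"
    then have "j \<in> S" by (simp add: S_def)
    then have "j \<le> m" unfolding m_def by (rule Max_ge[OF finS])
    then show False using that by simp
  qed
  have ZN: "set_mset Z \<subseteq> N" "set_mset Z' \<subseteq> N" and v: "val Z = val Z'" using Z Z' by (auto simp: FF_def)
  have cnt0: "count Z j = 0" "count Z' j = 0" if "j \<notin> N" for j
    using ZN that by (auto simp: not_in_iff[symmetric])
  have mN: "m \<in> N"
  proof (rule ccontr)
    assume "m \<notin> N" then show False using mdiff cnt0[of m] by simp
  qed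
  have red: "count X j < B ^ hp j" if "\<nexists>W. stp_dn X W" "j \<in> N" "0 < j" for X j
  proof (rule ccontr)
    assume "\<not> count X j < B ^ hp j"
    then have "stp_dn X (X - replicate_mset (B ^ hp j) j + replicate_mset (A ^ hp j) (predN j))"
      unfolding stp_dn_def using that(2,3) by (intro bexI[of _ j]) auto
    then show False using that(1) by blast
  qed
  show False
  proof (cases "m = 0")
    case True
    define t where "t = count Z 0 + count Z' 0 + 1"
    have "int B ^ t dvd int (count Z m) - int (count Z' m)"
      by (rule divB[OF v]) (use above True in auto)
    then have "int (B ^ t) dvd int (count Z m) - int (count Z' m)" by simp
    moreover have "t < B ^ t"
    proof -
      have "t < 2 ^ t" by simp
      also have "2 ^ t \<le> B ^ t" using B2 by (intro power_mono) auto
      finally show ?thesis .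
    qed
    moreover have "count Z m < B ^ t" "count Z' m < B ^ t"
      using \<open>t < B ^ t\<close> True unfolding t_def by auto
    ultimately have "count Z m = count Z' m" by (intro small_dvd) auto
    then show False using mdiff by simp
  next
    case False
    have "int B ^ hp m dvd int (count Z m) - int (count Z' m)"
    proof (rule divB[OF v], intro allI impI)
      fix j assume j: "j \<noteq> m \<and> (m < j \<or> m < j + hp m)"
      show "count Z j = count Z' j"
      proof (cases "m < j")
        case True then show ?thesis by (rule above)
      next
        case c: False
        then have "predN m < j" "j < m" using j hp_pred[of m] False by auto
        then have "j \<notin> N" using predN(3)[of m j] False by auto
        then show ?thesis using cnt0 by simp
      qed
    qed
    then have "int (B ^ hp m) dvd int (count Z m) - int (count Z' m)" by simp
    moreover have "0 < m" using False by simp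
    ultimately have "count Z m = count Z' m"
      using red[OF rZ mN] red[OF rZ' mN] by (intro small_dvd) auto
    then show False using mdiff by simp
  qed
qed

lemma upper_bound:
  assumes "d \<in> delta_elem MM x"
  shows "d \<le> (if B < A then A ^ s1 - B ^ s1 else B ^ s1 - A ^ s1)"
proof (cases "B < A")
  case True
  have "d \<le> A ^ s1 - B ^ s1"
  proof (rule delta_le[OF _ assms])
    fix Z Z' assume h: "Z \<in> FF x" "Z' \<in> FF x" "size Z < size Z'"
    have st: "\<And>Z Z'. Z \<in> FF x \<Longrightarrow> stp_up Z Z' \<Longrightarrow> Z' \<in> FF x \<and> size Z' < size Z \<and> size Z \<le> size Z' + (A ^ s1 - B ^ s1)"
      by (rule up_step[OF True])
    have un: "\<And>Z Z'. Z \<in> FF x \<Longrightarrow> Z' \<in> FF x \<Longrightarrow> (\<nexists>W. stp_up Z W) \<Longrightarrow> (\<nexists>W. stp_up Z' W) \<Longrightarrow> Z = Z'"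
      by (rule up_uniq)
    show "\<exists>W\<in>FF x. size Z < size W \<and> size W \<le> size Z + (A ^ s1 - B ^ s1)"
      by (rule dist_bound[OF st un h(1) h(2) h(3)])
  qed
  then show ?thesis using True by simp
next
  case False
  have AB: "A < B"
  proof -
    have "A \<noteq> B"
    proof
      assume e: "A = B"
      have "rr = of_nat A / of_nat B" by (simp only: rr_def)
      also have "\<dots> = 1" using e B2 by simp
      finally show False using rr_ne1 by simp
    qed
    then show ?thesis using False by simp
  qed
  have "d \<le> B ^ s1 - A ^ s1"
  proof (rule delta_le[OF _ assms])
    fix Z Z' assume h: "Z \<in> FF x" "Z' \<in> FF x" "size Z < size Z'"
    have st: "\<And>Z Z'. Z \<in> FF x \<Longrightarrow> stp_dn Z Z' \<Longrightarrow> Z' \<in> FF x \<and> size Z' < size Z \<and> size Z \<le> size Z' + (B ^ s1 - A ^ s1)"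
      by (rule dn_step[OF AB])
    have un: "\<And>Z Z'. Z \<in> FF x \<Longrightarrow> Z' \<in> FF x \<Longrightarrow> (\<nexists>W. stp_dn Z W) \<Longrightarrow> (\<nexists>W. stp_dn Z' W) \<Longrightarrow> Z = Z'"
      by (rule dn_uniq)
    show "\<exists>W\<in>FF x. size Z < size W \<and> size W \<le> size Z + (B ^ s1 - A ^ s1)"
      by (rule dist_bound[OF st un h(1) h(2) h(3)])
  qed
  then show ?thesis using False by simp
qed

lemma predN_ge: "k \<in> N \<Longrightarrow> k < j \<Longrightarrow> k \<le> predN j"
  unfolding predN_def by (rule Max_ge) auto

lemma count_le_size: "count Z j \<le> size Z"
proof -
  have "replicate_mset (count Z j) j \<subseteq># Z" by (simp add: count_le_replicate_mset_subset_eq[symmetric])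
  then have "size (replicate_mset (count Z j) j) \<le> size Z" by (rule size_mset_mono)
  then show ?thesis by simp
qed

lemma delta_dvd:
  assumes "d \<in> delta_elem MM x"
  shows "\<bar>int A - int B\<bar> \<le> int d"
proof -
  from assms obtain l where d0: "0 < d" and eq: "lengths MM x \<inter> {l..l+d} = {l, l+d}"
    by (auto simp: delta_elem_def)
  have "l \<in> lengths MM x" "l + d \<in> lengths MM x" using eq by blast+
  then obtain Z Z' where Z: "Z \<in> FF x" "size Z = l" and Z': "Z' \<in> FF x" "size Z' = l + d"
    unfolding lengths_FF by auto
  have "val Z' = val Z" using Z Z' by (simp add: FF_def)
  then have "(int A - int B) dvd int (size Z') - int (size Z)" by (rule divC)
  then have dv: "(int A - int B) dvd int d" using Z Z' by simp
  then show ?thesis using dvd_imp_le_int[of "int d" "int A - int B"] d0 by simp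
qed

lemma up_key:
  assumes BA: "B < A" and iN: "i \<in> N"
  defines "a \<equiv> A ^ gp i" and "x \<equiv> val (replicate_mset (A ^ gp i) i)"
  shows "Z \<in> FF x \<Longrightarrow> (\<exists>k\<in>#Z. k < succN i) \<Longrightarrow> a \<le> size Z"
proof (induction "sum_mset (image_mset (\<lambda>k. succN i - k) Z)" arbitrary: Z rule: less_induct)
  case less
  let ?s = "succN i"
  have ZN: "set_mset Z \<subseteq> N" and v: "val Z = val (replicate_mset a i)"
    using less.prems(1) by (auto simp: FF_def x_def a_def)
  have fin: "finite (set_mset Z)" by simp
  have ne: "set_mset Z \<noteq> {}" using less.prems(2) by auto
  define m where "m = Min (set_mset Z)"
  have mZ: "m \<in># Z" using Min_in[OF fin ne] by (simp add: m_def)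
  have ms: "m < ?s"
  proof -
    obtain k where k: "k \<in># Z" "k < ?s" using less.prems(2) by blast
    then have "m \<le> k" unfolding m_def using Min_le[OF fin] by simp
    then show ?thesis using k by simp
  qed
  have mN: "m \<in> N" using mZ ZN by auto
  have mi: "m \<le> i"
  proof (rule ccontr)
    assume "\<not> m \<le> i" then have "m \<notin> N" using succN_gap[of i m] ms by simp
    then show False using mN by simp
  qed
  have below: "count Z j = 0" if "j < m" for j
  proof (rule ccontr)
    assume "count Z j \<noteq> 0"
    then have "j \<in> set_mset Z" by simp
    then have "m \<le> j" unfolding m_def by (rule Min_le[OF fin])
    then show False using that by simp
  qed
  have cnt0: "count Z j = 0" if "j \<notin> N" for j
    using ZN that by (auto simp: not_in_iff[symmetric])
  show ?case
  proof (cases "m = i")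
    case True
    have "int A ^ gp i dvd int (count Z i) - int (count (replicate_mset a i) i)"
    proof (rule divA[OF v], intro allI impI)
      fix j assume j: "j \<noteq> i \<and> j < i + gp i"
      show "count Z j = count (replicate_mset a i) j"
      proof (cases "j < i")
        case True then show ?thesis using below \<open>m = i\<close> j by simp
      next
        case False
        then have "i < j" "j < ?s" using j gp_succ[of i] by auto
        then have "j \<notin> N" by (rule succN_gap)
        then show ?thesis using cnt0 j by simp
      qed
    qed
    then have "int a dvd int (count Z i) - int a" by (simp add: a_def)
    then have "int a dvd (int (count Z i) - int a) + int a" by (rule dvd_add) simp
    then have "int a dvd int (count Z i)" by simp
    then have "a dvd count Z i" by (simp only: of_nat_dvd_iff)
    moreover have "0 < count Z i" using mZ True by simp
    ultimately have "a \<le> count Z i" by (rule dvd_imp_le)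
    then show ?thesis using count_le_size[of Z i] by linarith
  next
    case False
    then have mi': "m < i" using mi by simp
    define t where "t = gp m"
    have "int A ^ t dvd int (count Z m) - int (count (replicate_mset a i) m)"
    proof (rule divA[OF v], intro allI impI)
      fix j assume j: "j \<noteq> m \<and> j < m + t"
      have ji: "j < i \<or> j = m"
        using j succN_le[OF iN mi'] gp_succ[of m] by (cases "j < m") (auto simp: t_def)
      show "count Z j = count (replicate_mset a i) j"
      proof (cases "j < m")
        case True then show ?thesis using below mi' by simp
      next
        case c: False
        then have "m < j" "j < succN m" using j gp_succ[of m] by (auto simp: t_def)
        then have "j \<notin> N" by (rule succN_gap)
        then show ?thesis using cnt0 j ji by auto
      qed
    qed
    then have "int (A ^ t) dvd int (count Z m) - int 0" using mi' by simp
    then have cA: "A ^ t \<le> count Z m" using mZ by (intro dvd_ge) auto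
    define Z' where "Z' = Z - replicate_mset (A ^ t) m + replicate_mset (B ^ t) (succN m)"
    note P = push[OF cA up_val[of m, folded t_def] ZN succN(1)]
    have Z'F: "Z' \<in> FF x" using P(1,2) less.prems(1) unfolding Z'_def FF_def by simp
    have sm: "succN m \<le> i" using succN_le[OF iN mi'] .
    have ex': "\<exists>k\<in>#Z'. k < ?s"
      using sm succN(2)[of i] B2 by (intro bexI[of _ "succN m"]) (auto simp: Z'_def)
    have BAt: "B ^ t < A ^ t" using BA gp_pos[of m] by (intro power_strict_mono) (auto simp: t_def)
    define Z0 where "Z0 = Z - replicate_mset (A ^ t) m"
    have ZZ0: "Z = Z0 + replicate_mset (A ^ t) m" using P(4) by (simp add: Z0_def)
    have Z'Z0: "Z' = Z0 + replicate_mset (B ^ t) (succN m)" by (simp add: Z'_def Z0_def)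
    have "B ^ t * (?s - succN m) < A ^ t * (?s - m)"
    proof -
      have "?s - succN m \<le> ?s - m" using succN(2)[of m] by simp
      then have "B ^ t * (?s - succN m) \<le> B ^ t * (?s - m)" by (rule mult_le_mono2)
      also have "\<dots> < A ^ t * (?s - m)" using BAt ms by simp
      finally show ?thesis .
    qed
    then have mu: "sum_mset (image_mset (\<lambda>k. ?s - k) Z') < sum_mset (image_mset (\<lambda>k. ?s - k) Z)"
      unfolding Z'Z0 by (subst ZZ0) simp
    have "a \<le> size Z'" by (rule less.hyps[OF mu Z'F ex'])
    moreover have "size Z' + A ^ t = size Z + B ^ t" using P(3) by (simp add: Z'_def)
    ultimately show ?thesis using BAt by linarith
  qed
qed

lemma dn_key:
  assumes AB: "A < B" and iN: "i \<in> N"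
  defines "b \<equiv> B ^ gp i" and "x \<equiv> val (replicate_mset (B ^ gp i) (succN i))"
  shows "Z \<in> FF x \<Longrightarrow> (\<exists>k\<in>#Z. i < k) \<Longrightarrow> b \<le> size Z"
proof (induction "sum_mset (image_mset (\<lambda>k. k - i) Z)" arbitrary: Z rule: less_induct)
  case less
  let ?s = "succN i"
  have ZN: "set_mset Z \<subseteq> N" and v: "val Z = val (replicate_mset b ?s)"
    using less.prems(1) by (auto simp: FF_def x_def b_def)
  have fin: "finite (set_mset Z)" by simp
  have ne: "set_mset Z \<noteq> {}" using less.prems(2) by auto
  define M where "M = Max (set_mset Z)"
  have MZ: "M \<in># Z" using Max_in[OF fin ne] by (simp add: M_def)
  have iM: "i < M"
  proof -
    obtain k where k: "k \<in># Z" "i < k" using less.prems(2) by blast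
    then have "k \<le> M" unfolding M_def using Max_ge[OF fin] by simp
    then show ?thesis using k by simp
  qed
  have MN: "M \<in> N" using MZ ZN by auto
  have sM: "?s \<le> M" using succN_le[OF MN iM] .
  have above: "count Z j = 0" if "M < j" for j
  proof (rule ccontr)
    assume "count Z j \<noteq> 0"
    then have "j \<in> set_mset Z" by simp
    then have "j \<le> M" unfolding M_def by (rule Max_ge[OF fin])
    then show False using that by simp
  qed
  have cnt0: "count Z j = 0" if "j \<notin> N" for j
    using ZN that by (auto simp: not_in_iff[symmetric])
  show ?case
  proof (cases "M = ?s")
    case True
    have "int B ^ gp i dvd int (count Z ?s) - int (count (replicate_mset b ?s) ?s)"
    proof (rule divB[OF v], intro allI impI)
      fix j assume j: "j \<noteq> ?s \<and> (?s < j \<or> ?s < j + gp i)"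
      show "count Z j = count (replicate_mset b ?s) j"
      proof (cases "?s < j")
        case True then show ?thesis using above \<open>M = ?s\<close> by simp
      next
        case False
        then have "i < j" "j < ?s" using j gp_succ[of i] by auto
        then have "j \<notin> N" by (rule succN_gap)
        then show ?thesis using cnt0 j by simp
      qed
    qed
    then have "int b dvd int (count Z ?s) - int b" by (simp add: b_def)
    then have "int b dvd (int (count Z ?s) - int b) + int b" by (rule dvd_add) simp
    then have "int b dvd int (count Z ?s)" by simp
    then have "b dvd count Z ?s" by (simp only: of_nat_dvd_iff)
    moreover have "0 < count Z ?s" using MZ True by simp
    ultimately have "b \<le> count Z ?s" by (rule dvd_imp_le)
    then show ?thesis using count_le_size[of Z ?s] by linarith
  next
    case False
    then have sM': "?s < M" using sM by simp
    have M0: "0 < M" using iM by simp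
    define t where "t = hp M"
    have spM: "?s \<le> predN M" using predN_ge[OF succN(1) sM'] .
    have "int B ^ t dvd int (count Z M) - int (count (replicate_mset b ?s) M)"
    proof (rule divB[OF v], intro allI impI)
      fix j assume j: "j \<noteq> M \<and> (M < j \<or> M < j + t)"
      show "count Z j = count (replicate_mset b ?s) j"
      proof (cases "M < j")
        case True then show ?thesis using above sM' by simp
      next
        case c: False
        then have "predN M < j" "j < M" using j hp_pred[OF M0] by (auto simp: t_def)
        then have "j \<notin> N" "j \<noteq> ?s" using predN(3)[OF M0] spM by auto
        then show ?thesis using cnt0 by simp
      qed
    qed
    then have "int (B ^ t) dvd int (count Z M) - int 0" using sM' by simp
    then have cB: "B ^ t \<le> count Z M" using MZ by (intro dvd_ge) auto
    define Z' where "Z' = Z - replicate_mset (B ^ t) M + replicate_mset (A ^ t) (predN M)"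
    note P = push[OF cB dn_val[OF M0, folded t_def] ZN predN(1)[OF M0]]
    have Z'F: "Z' \<in> FF x" using P(1,2) less.prems(1) unfolding Z'_def FF_def by simp
    have ex': "\<exists>k\<in>#Z'. i < k"
      using spM succN(2)[of i] A2 by (intro bexI[of _ "predN M"]) (auto simp: Z'_def)
    have ABt: "A ^ t < B ^ t" using AB hp_pos[OF M0] by (intro power_strict_mono) (auto simp: t_def)
    define Z0 where "Z0 = Z - replicate_mset (B ^ t) M"
    have ZZ0: "Z = Z0 + replicate_mset (B ^ t) M" using P(4) by (simp add: Z0_def)
    have Z'Z0: "Z' = Z0 + replicate_mset (A ^ t) (predN M)" by (simp add: Z'_def Z0_def)
    have "A ^ t * (predN M - i) < B ^ t * (M - i)"
    proof -
      have "predN M - i \<le> M - i" using predN(2)[OF M0] by simp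
      then have "A ^ t * (predN M - i) \<le> A ^ t * (M - i)" by (rule mult_le_mono2)
      also have "\<dots> < B ^ t * (M - i)" using ABt iM by simp
      finally show ?thesis .
    qed
    then have mu: "sum_mset (image_mset (\<lambda>k. k - i) Z') < sum_mset (image_mset (\<lambda>k. k - i) Z)"
      unfolding Z'Z0 by (subst ZZ0) simp
    have "b \<le> size Z'" by (rule less.hyps[OF mu Z'F ex'])
    moreover have "size Z' + B ^ t = size Z + A ^ t" using P(3) by (simp add: Z'_def)
    ultimately show ?thesis using ABt by linarith
  qed
qed

lemma delta_from:
  assumes Z1: "Z1 \<in> FF x" and Z2: "Z2 \<in> FF x" and lt: "size Z2 < size Z1"
    and gap: "\<forall>Z\<in>FF x. size Z \<le> size Z2 \<or> size Z1 \<le> size Z"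
  shows "size Z1 - size Z2 \<in> delta_elem MM x"
proof -
  let ?l = "size Z2" and ?d = "size Z1 - size Z2"
  have "lengths MM x \<inter> {?l..?l + ?d} = {?l, ?l + ?d}"
  proof
    show "lengths MM x \<inter> {?l..?l + ?d} \<subseteq> {?l, ?l + ?d}"
    proof
      fix l' assume "l' \<in> lengths MM x \<inter> {?l..?l + ?d}"
      then obtain Z where "Z \<in> FF x" "size Z = l'" "?l \<le> l'" "l' \<le> ?l + ?d"
        unfolding lengths_FF by auto
      then show "l' \<in> {?l, ?l + ?d}" using gap lt by force
    qed
  next
    show "{?l, ?l + ?d} \<subseteq> lengths MM x \<inter> {?l..?l + ?d}"
      using Z1 Z2 lt unfolding lengths_FF by auto
  qed
  moreover have "?l \<in> lengths MM x" using Z2 unfolding lengths_FF by auto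
  ultimately have "\<exists>l\<in>lengths MM x. lengths MM x \<inter> {l..l + ?d} = {l, l + ?d}" by blast
  then show ?thesis using lt unfolding delta_elem_def by simp
qed

lemma up_delta:
  assumes BA: "B < A" and iN: "i \<in> N"
  shows "A ^ gp i - B ^ gp i \<in> delta_elem MM (val (replicate_mset (A ^ gp i) i))"
proof -
  define x where "x = val (replicate_mset (A ^ gp i) i)"
  let ?Z1 = "replicate_mset (A ^ gp i) i" and ?Z2 = "replicate_mset (B ^ gp i) (succN i)"
  have Z1: "?Z1 \<in> FF x" using iN by (auto simp: FF_def x_def)
  have Z2: "?Z2 \<in> FF x" using succN(1)[of i] up_val[of i] by (auto simp: FF_def x_def)
  have lt: "size ?Z2 < size ?Z1" using BA gp_pos[of i] by (simp add: power_strict_mono)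
  have rr1: "1 \<le> rr" using BA B2 by (simp add: rr_def)
  have gap: "\<forall>Z\<in>FF x. size Z \<le> size ?Z2 \<or> size ?Z1 \<le> size Z"
  proof
    fix Z assume Z: "Z \<in> FF x"
    show "size Z \<le> size ?Z2 \<or> size ?Z1 \<le> size Z"
    proof (cases "\<exists>k\<in>#Z. k < succN i")
      case True
      then show ?thesis using up_key[OF BA iN, of Z] Z by (simp add: x_def)
    next
      case False
      then have "\<forall>k\<in>#Z. rr ^ succN i \<le> rr ^ k" using rr1 by (auto intro: power_increasing simp: not_less)
      then have "of_nat (size Z) * rr ^ succN i \<le> val Z" by (rule val_size_ge)
      also have "val Z = of_nat (B ^ gp i) * rr ^ succN i"
        using Z up_val[of i] by (simp add: FF_def x_def)
      finally have "size Z \<le> B ^ gp i" using rr_pos by (simp add: mult_le_cancel_right_pos)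
      then show ?thesis by simp
    qed
  qed
  show ?thesis using delta_from[OF Z1 Z2 lt gap] by (simp add: x_def)
qed

lemma dn_delta:
  assumes AB: "A < B" and iN: "i \<in> N"
  shows "B ^ gp i - A ^ gp i \<in> delta_elem MM (val (replicate_mset (B ^ gp i) (succN i)))"
proof -
  define x where "x = val (replicate_mset (B ^ gp i) (succN i))"
  let ?Z1 = "replicate_mset (B ^ gp i) (succN i)" and ?Z2 = "replicate_mset (A ^ gp i) i"
  have Z1: "?Z1 \<in> FF x" using succN(1)[of i] by (auto simp: FF_def x_def)
  have Z2: "?Z2 \<in> FF x" using iN up_val[of i] by (auto simp: FF_def x_def)
  have lt: "size ?Z2 < size ?Z1" using AB gp_pos[of i] by (simp add: power_strict_mono)
  have rr1: "rr \<le> 1" using AB B2 by (simp add: rr_def)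
  have gap: "\<forall>Z\<in>FF x. size Z \<le> size ?Z2 \<or> size ?Z1 \<le> size Z"
  proof
    fix Z assume Z: "Z \<in> FF x"
    show "size Z \<le> size ?Z2 \<or> size ?Z1 \<le> size Z"
    proof (cases "\<exists>k\<in>#Z. i < k")
      case True
      then show ?thesis using dn_key[OF AB iN, of Z] Z by (simp add: x_def)
    next
      case False
      then have "\<forall>k\<in>#Z. rr ^ i \<le> rr ^ k" using rr1 rr_pos
        by (auto intro: power_decreasing simp: not_less)
      then have "of_nat (size Z) * rr ^ i \<le> val Z" by (rule val_size_ge)
      also have "val Z = of_nat (A ^ gp i) * rr ^ i"
        using Z up_val[of i] by (simp add: FF_def x_def)
      finally have "size Z \<le> A ^ gp i" using rr_pos by (simp add: mult_le_cancel_right_pos)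
      then show ?thesis by simp
    qed
  qed
  show ?thesis using delta_from[OF Z1 Z2 lt gap] by (simp add: x_def)
qed

end

theorem mainTheorem9:
  fixes r :: rat and N :: "nat set"
  assumes "numerical_monoid N"
    and "r > 0"
    and "r \<notin> \<nat>"
    and "atomic_monoid (exp_puiseux r N)"
  shows "{\<bar>rnum r ^ nm_gap N n - rden r ^ nm_gap N n\<bar> | n. True}
           \<subseteq> int ` delta_set (exp_puiseux r N) \<and>
         int ` delta_set (exp_puiseux r N)
           \<subseteq> {k. \<bar>rnum r - rden r\<bar> \<le> k \<and> k \<le> \<bar>rnum r ^ nm_gap N 0 - rden r ^ nm_gap N 0\<bar>}"
proof -
  obtain p q where pq: "quotient_of r = (p, q)" by (cases "quotient_of r") auto
  have q0: "0 < q" using quotient_of_denom_pos[OF pq] .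
  have cpq: "coprime p q" using quotient_of_coprime[OF pq] .
  have rpq: "r = of_int p / of_int q" using quotient_of_div[OF pq] .
  have p0: "0 < p"
  proof (rule ccontr)
    assume "\<not> 0 < p"
    then have "of_int p / of_int q \<le> (0::rat)" using q0 by (simp add: divide_nonpos_pos)
    then show False using assms(2) rpq by simp
  qed
  define A where "A = nat p"
  define B where "B = nat q"
  have Ap: "int A = p" and Bq: "int B = q" using p0 q0 by (auto simp: A_def B_def)
  have rnum: "rnum r = int A" and rden: "rden r = int B" using pq Ap Bq by (auto simp: rnum_def rden_def)
  have q1: "q \<noteq> 1"
  proof
    assume "q = 1"
    then have "r = of_nat (nat p)" using rpq p0 by simp
    then show False using assms(3) by (simp add: Nats_def)
  qed
  have B2: "2 \<le> B" using q0 q1 by (simp add: B_def)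
  have A1: "1 \<le> A" using p0 by (simp add: A_def)
  have cop: "coprime A B" using cpq Ap Bq by (metis coprime_int_iff)
  interpret P0: ps0 A B N using assms(1) A1 B2 cop by unfold_locales
  have rr: "P0.rr = r" unfolding P0.rr_def using rpq Ap Bq by (metis of_int_of_nat_eq)
  have A2: "2 \<le> A"
  proof (rule ccontr)
    assume "\<not> 2 \<le> A"
    then have "A = 1" using A1 by simp
    then show False using P0.A1_notatomic assms(4) rr by simp
  qed
  interpret P: ps A B N using A2 by unfold_locales
  have part1: "\<bar>rnum r ^ nm_gap N n - rden r ^ nm_gap N n\<bar> \<in> int ` delta_set (exp_puiseux r N)" for n
  proof -
    define i where "i = enumerate N n"
    have iN: "i \<in> N" unfolding i_def by (rule P0.enumN)
    have g: "nm_gap N n = P.gp i" by (simp add: P0.gapn P.gp_def i_def)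
    show ?thesis
    proof (cases "B < A")
      case True
      let ?x = "P0.val (replicate_mset (A ^ P.gp i) i)"
      have d: "A ^ P.gp i - B ^ P.gp i \<in> delta_elem (exp_puiseux r N) ?x"
        using P.up_delta[OF True iN] rr by simp
      have xM: "?x \<in> exp_puiseux r N" using P0.val_in[of "replicate_mset (A ^ P.gp i) i"] iN rr by simp
      have le: "B ^ P.gp i \<le> A ^ P.gp i" using True by (simp add: power_mono)
      have le': "int B ^ P.gp i \<le> int A ^ P.gp i" by (metis of_nat_le_iff of_nat_power le)
      have "int (A ^ P.gp i - B ^ P.gp i) = \<bar>rnum r ^ nm_gap N n - rden r ^ nm_gap N n\<bar>"
        using le le' unfolding rnum rden g by (simp add: of_nat_diff)
      then show ?thesis using d xM unfolding delta_set_def by (metis UN_I image_eqI)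
    next
      case False
      have AB: "A < B"
      proof -
        have "A \<noteq> B" using P0.rr_ne1 B2 by (auto simp: P0.rr_def)
        then show ?thesis using False by simp
      qed
      let ?x = "P0.val (replicate_mset (B ^ P.gp i) (P0.succN i))"
      have d: "B ^ P.gp i - A ^ P.gp i \<in> delta_elem (exp_puiseux r N) ?x"
        using P.dn_delta[OF AB iN] rr by simp
      have xM: "?x \<in> exp_puiseux r N"
        using P0.val_in[of "replicate_mset (B ^ P.gp i) (P0.succN i)"] P0.succN(1)[of i] rr by simp
      have le: "A ^ P.gp i \<le> B ^ P.gp i" using AB by (simp add: power_mono)
      have le': "int A ^ P.gp i \<le> int B ^ P.gp i" by (metis of_nat_le_iff of_nat_power le)
      have "int (B ^ P.gp i - A ^ P.gp i) = \<bar>rnum r ^ nm_gap N n - rden r ^ nm_gap N n\<bar>"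
        using le le' unfolding rnum rden g by (simp add: of_nat_diff)
      then show ?thesis using d xM unfolding delta_set_def by (metis UN_I image_eqI)
    qed
  qed
  have part2: "\<bar>rnum r - rden r\<bar> \<le> int d \<and> int d \<le> \<bar>rnum r ^ nm_gap N 0 - rden r ^ nm_gap N 0\<bar>"
    if dD: "d \<in> delta_set (exp_puiseux r N)" for d
  proof -
    obtain x where x: "d \<in> delta_elem (exp_puiseux r N) x" using dD unfolding delta_set_def by blast
    have d: "d \<in> delta_elem P0.MM x" using x rr by simp
    have lo: "\<bar>int A - int B\<bar> \<le> int d" by (rule P.delta_dvd[OF d])
    have up: "d \<le> (if B < A then A ^ P0.s1 - B ^ P0.s1 else B ^ P0.s1 - A ^ P0.s1)" by (rule P.upper_bound[OF d])
    have "int d \<le> \<bar>int A ^ P0.s1 - int B ^ P0.s1\<bar>"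
    proof (cases "B < A")
      case True
      have le: "B ^ P0.s1 \<le> A ^ P0.s1" using True by (simp add: power_mono)
      have le': "int B ^ P0.s1 \<le> int A ^ P0.s1" by (metis of_nat_le_iff of_nat_power le)
      have e: "int (A ^ P0.s1 - B ^ P0.s1) = int A ^ P0.s1 - int B ^ P0.s1"
        by (simp only: of_nat_diff[OF le] of_nat_power)
      have "d \<le> A ^ P0.s1 - B ^ P0.s1" using up True by simp
      then have "int d \<le> int (A ^ P0.s1 - B ^ P0.s1)" by (simp only: of_nat_le_iff)
      then show ?thesis unfolding e using le' by simp
    next
      case False
      have le: "A ^ P0.s1 \<le> B ^ P0.s1" using False by (simp add: power_mono)
      have le': "int A ^ P0.s1 \<le> int B ^ P0.s1" by (metis of_nat_le_iff of_nat_power le)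
      have e: "int (B ^ P0.s1 - A ^ P0.s1) = int B ^ P0.s1 - int A ^ P0.s1"
        by (simp only: of_nat_diff[OF le] of_nat_power)
      have "d \<le> B ^ P0.s1 - A ^ P0.s1" using up False by simp
      then have "int d \<le> int (B ^ P0.s1 - A ^ P0.s1)" by (simp only: of_nat_le_iff)
      then show ?thesis unfolding e using le' by simp
    qed
    then show ?thesis using lo unfolding rnum rden P0.gap0 by simp
  qed
  show ?thesis using part1 part2 by blast
qed

end
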